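(* There exist a planar graph $G$ and a signature $\sigma:E(G)\to\{-1,+1\}$ such that the signed graph $(G,\sigma)$ has no $Z_4$-colouring. In particular, not every planar graph is signed $Z_4$-colourable.
   Context: A $Z_4$-colouring of a signed graph $(G,\sigma)$ is a map $f:V(G)\to\mathbb Z_4$ such that $f(x)\ne\sigma(e)f(y)$ in $\mathbb Z_4$ for every edge $e=xy$. $G$ is signed $Z_4$-colourable if $(G,\sigma)$ has a $Z_4$-colouring for every signature $\sigma$. *)

theory Defs
  imports "HOL-Analysis.Analysis" "HOL-Library.Numeral_Type"
begin

definition simple_graph :: "'a set \<Rightarrow> 'a set set \<Rightarrow> bool" where
  "simple_graph V E \<longleftrightarrow> finite V \<and>
     (\<forall>e\<in>E. \<exists>u v. e = {u, v} \<and> u \<noteq> v \<and> u \<in> V \<and> v \<in> V)"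

definition planar_embedding ::
  "'a set \<Rightarrow> 'a set set \<Rightarrow> ('a \<Rightarrow> complex) \<Rightarrow> ('a set \<Rightarrow> real \<Rightarrow> complex) \<Rightarrow> bool" where
  "planar_embedding V E p c \<longleftrightarrow>
     inj_on p V \<and>
     (\<forall>e\<in>E. arc (c e) \<and> {pathstart (c e), pathfinish (c e)} = p ` e \<and>
              path_image (c e) \<inter> p ` V = p ` e) \<and>
     (\<forall>e\<in>E. \<forall>e'\<in>E. e \<noteq> e' \<longrightarrow>
              path_image (c e) \<inter> path_image (c e') \<subseteq> p ` (e \<inter> e'))"

definition planar :: "'a set \<Rightarrow> 'a set set \<Rightarrow> bool" where
  "planar V E \<longleftrightarrow> simple_graph V E \<and> (\<exists>p c. planar_embedding V E p c)"

definition signature :: "'a set set \<Rightarrow> ('a set \<Rightarrow> int) \<Rightarrow> bool" where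
  "signature E \<sigma> \<longleftrightarrow> (\<forall>e\<in>E. \<sigma> e = 1 \<or> \<sigma> e = -1)"

text \<open>Z_4-colouring of the signed graph (G, sigma); the type 4 is the ring Z/4Z.\<close>
definition Z4_colouring :: "'a set \<Rightarrow> 'a set set \<Rightarrow> ('a set \<Rightarrow> int) \<Rightarrow> ('a \<Rightarrow> 4) \<Rightarrow> bool" where
  "Z4_colouring V E \<sigma> f \<longleftrightarrow>
     (\<forall>e\<in>E. \<forall>x y. e = {x, y} \<longrightarrow> f x \<noteq> of_int (\<sigma> e) * f y)"

definition signed_Z4_colourable :: "'a set \<Rightarrow> 'a set set \<Rightarrow> bool" where
  "signed_Z4_colourable V E \<longleftrightarrow>
     (\<forall>\<sigma>. signature E \<sigma> \<longrightarrow> (\<exists>f. Z4_colouring V E \<sigma> f))"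

end

theory Submission
  imports Defs
begin


definition cr :: "complex \<Rightarrow> complex \<Rightarrow> complex \<Rightarrow> real" where
  "cr a b c = Re (b - a) * Im (c - a) - Im (b - a) * Re (c - a)"

lemma cr_comb: "cr a b ((1 - u) *\<^sub>R c + u *\<^sub>R d) = (1 - u) * cr a b c + u * cr a b d"
  unfolding cr_def by (simp add: scaleR_conv_of_real algebra_simps)

lemma cr_on_seg: assumes "x \<in> closed_segment a b" shows "cr a b x = 0"
proof -
  from assms obtain u where x: "x = (1 - u) *\<^sub>R a + u *\<^sub>R b" unfolding closed_segment_def by auto
  show ?thesis unfolding x cr_comb by (simp add: cr_def)
qed

lemma seg_disj1:
  assumes "cr a b c * cr a b d > 0"
  shows "closed_segment a b \<inter> closed_segment c d = {}"
proof (rule ccontr)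
  assume "closed_segment a b \<inter> closed_segment c d \<noteq> {}"
  then obtain x where x1: "x \<in> closed_segment a b" and x2: "x \<in> closed_segment c d" by auto
  from x2 obtain u where u: "0 \<le> u" "u \<le> 1" and x: "x = (1 - u) *\<^sub>R c + u *\<^sub>R d"
    unfolding closed_segment_def by auto
  have "cr a b x = 0" using cr_on_seg[OF x1] .
  hence 0: "(1 - u) * cr a b c + u * cr a b d = 0" using x cr_comb by simp
  show False
  proof (cases "cr a b c > 0")
    case True
    hence "cr a b d > 0" using assms by (simp add: zero_less_mult_iff)
    moreover have "(1 - u) * cr a b c \<ge> 0" using True u by simp
    moreover have "u * cr a b d \<ge> 0" using \<open>cr a b d > 0\<close> u by simp
    ultimately have "(1 - u) * cr a b c = 0 \<and> u * cr a b d = 0" using 0 by linarith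
    thus False using True \<open>cr a b d > 0\<close> by auto
  next
    case False
    hence c: "cr a b c < 0" "cr a b d < 0" using assms by (auto simp add: zero_less_mult_iff)
    have "(1 - u) * cr a b c \<le> 0" using c u by (simp add: mult_nonneg_nonpos)
    moreover have "u * cr a b d \<le> 0" using c u by (simp add: mult_nonneg_nonpos)
    ultimately have "(1 - u) * cr a b c = 0 \<and> u * cr a b d = 0" using 0 by linarith
    thus False using c u by auto
  qed
qed

lemma cr_lin: "cr a b (a + t *\<^sub>R (d - a)) = t * cr a b d"
  unfolding cr_def by (simp add: scaleR_conv_of_real algebra_simps)

lemma seg_share:
  assumes "cr a b d \<noteq> 0"
  shows "closed_segment a b \<inter> closed_segment a d = {a}"
proof
  show "{a} \<subseteq> closed_segment a b \<inter> closed_segment a d" by auto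
  show "closed_segment a b \<inter> closed_segment a d \<subseteq> {a}"
  proof
    fix x assume x: "x \<in> closed_segment a b \<inter> closed_segment a d"
    then obtain t where t: "x = a + t *\<^sub>R (d - a)"
      unfolding closed_segment_def by (auto simp: algebra_simps)
    have "cr a b x = 0" using cr_on_seg x by blast
    hence "t = 0" using t cr_lin assms by simp
    thus "x \<in> {a}" using t by simp
  qed
qed

lemma not_on_seg: "cr a b v \<noteq> 0 \<Longrightarrow> v \<notin> closed_segment a b"
  using cr_on_seg by blast



lemma four_cases: "(x::4) = 0 \<or> x = 1 \<or> x = 2 \<or> x = 3"
proof (induct x)
  case (of_int z)
  then have "z = 0 \<or> z = 1 \<or> z = 2 \<or> z = 3" by auto
  then show ?case by auto
qed

definition toi :: "4 \<Rightarrow> int" where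
  "toi x = (if x = 0 then 0 else if x = 1 then 1 else if x = 2 then 2 else 3)"

lemma toi_range: "toi x \<in> {0,1,2,3}" unfolding toi_def by auto

lemma toi_rel:
  assumes "s = 1 \<or> s = -1"
  shows "(x = of_int s * y) \<longleftrightarrow> toi x = (s * toi y) mod 4"
  using four_cases[of x] four_cases[of y] assms
  by (auto simp: toi_def)



type_synonym sedge = "nat \<times> nat \<times> int"

definition okc :: "(nat \<times> int) list list \<Rightarrow> nat \<Rightarrow> int \<Rightarrow> (nat \<Rightarrow> int option) \<Rightarrow> bool" where
  "okc AL v c asg = (\<forall>(w,s)\<in>set (if v < length AL then AL ! v else []).
       (case asg w of None \<Rightarrow> True | Some d \<Rightarrow> c \<noteq> (s * d) mod 4))"

primrec ext :: "(nat \<times> int) list list \<Rightarrow> nat list \<Rightarrow> (nat \<Rightarrow> int option) \<Rightarrow> bool" where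
  "ext AL [] asg = True"
| "ext AL (v # vs) asg = (\<exists>c\<in>set [0,1,2,3]. okc AL v c asg \<and> ext AL vs (asg(v \<mapsto> c)))"

definition goodh :: "(nat \<times> int) list list \<Rightarrow> (nat \<Rightarrow> int) \<Rightarrow> bool" where
  "goodh AL h = ((\<forall>v. h v \<in> {0,1,2,3}) \<and>
      (\<forall>v < length AL. \<forall>(w,s)\<in>set (AL ! v). h v \<noteq> (s * h w) mod 4))"

definition agrees :: "(nat \<Rightarrow> int option) \<Rightarrow> (nat \<Rightarrow> int) \<Rightarrow> bool" where
  "agrees asg h = (\<forall>v d. asg v = Some d \<longrightarrow> d = h v)"

lemma okc_h: "goodh AL h \<Longrightarrow> agrees asg h \<Longrightarrow> okc AL v (h v) asg"
  unfolding okc_def goodh_def agrees_def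
  by (fastforce split: option.splits)

lemma agrees_upd: "agrees asg h \<Longrightarrow> agrees (asg(v \<mapsto> h v)) h"
  unfolding agrees_def by auto

lemma ext_sound: "goodh AL h \<Longrightarrow> agrees asg h \<Longrightarrow> ext AL vs asg"
proof (induction vs arbitrary: asg)
  case Nil then show ?case by simp
next
  case (Cons v vs)
  have "h v \<in> set [0,1,2,3]" using Cons.prems(1) unfolding goodh_def by auto
  moreover have "okc AL v (h v) asg" using okc_h Cons.prems by blast
  moreover have "ext AL vs (asg(v \<mapsto> h v))" using Cons.IH Cons.prems agrees_upd by blast
  ultimately show ?case by auto
qed

definition tripok :: "(nat \<Rightarrow> int option) \<Rightarrow> (int \<times> int \<times> int) list \<Rightarrow> nat \<times> nat \<times> nat \<Rightarrow> bool" where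
  "tripok asg OUTS t = (case asg (fst t) of None \<Rightarrow> False | Some a \<Rightarrow>
      (case asg (fst (snd t)) of None \<Rightarrow> False | Some b \<Rightarrow>
        (case asg (snd (snd t)) of None \<Rightarrow> False | Some c \<Rightarrow> (a,b,c) \<in> set OUTS)))"

primrec kill2 :: "(nat \<times> int) list list \<Rightarrow> nat list \<Rightarrow> (nat \<times> nat \<times> nat) list \<Rightarrow> (int \<times> int \<times> int) list
      \<Rightarrow> (nat \<Rightarrow> int option) \<Rightarrow> bool" where
  "kill2 AL [] trips OUTS asg = (\<exists>t\<in>set trips. tripok asg OUTS t)"
| "kill2 AL (v # vs) trips OUTS asg =
      (\<forall>c\<in>set [0,1,2,3]. okc AL v c asg \<longrightarrow> kill2 AL vs trips OUTS (asg(v \<mapsto> c)))"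

lemma kill2_sound: "goodh AL h \<Longrightarrow> agrees asg h \<Longrightarrow> kill2 AL vs trips OUTS asg \<Longrightarrow>
    \<exists>(x,y,z)\<in>set trips. (h x, h y, h z) \<in> set OUTS"
proof (induction vs arbitrary: asg)
  case Nil
  then obtain t where t: "t \<in> set trips" "tripok asg OUTS t" by auto
  obtain x y z where txyz: "t = (x,y,z)" by (cases t) auto
  have "(h x, h y, h z) \<in> set OUTS"
    using t(2) Nil.prems(2) unfolding txyz tripok_def agrees_def by (auto split: option.splits)
  then show ?case using t(1) txyz by auto
next
  case (Cons v vs)
  have "h v \<in> set [0,1,2,3]" using Cons.prems(1) unfolding goodh_def by auto
  moreover have "okc AL v (h v) asg" using okc_h Cons.prems by blast
  ultimately have "kill2 AL vs trips OUTS (asg(v \<mapsto> h v))" using Cons.prems(3) by auto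
  then show ?case using Cons.IH Cons.prems agrees_upd by blast
qed

definition oasg :: "int \<times> int \<times> int \<Rightarrow> nat \<Rightarrow> int option" where
  "oasg t = (case t of (a,b,c) \<Rightarrow> [0 \<mapsto> a, 1 \<mapsto> b, 2 \<mapsto> c])"

fun subchk :: "'a list \<Rightarrow> 'a list \<Rightarrow> bool" where
  "subchk [] ys = True"
| "subchk (x # xs) [] = False"
| "subchk (x # xs) (y # ys) = (if x = y then subchk xs ys else subchk (x # xs) ys)"

lemma subchk_set: "subchk xs ys \<Longrightarrow> set xs \<subseteq> set ys"
  by (induction xs ys rule: subchk.induct) (auto split: if_splits)

definition mapok :: "sedge list \<Rightarrow> sedge list \<Rightarrow> nat list \<Rightarrow> bool" where
  "mapok es GE m = subchk (map (\<lambda>(i,j,s). (min (m!i) (m!j), max (m!i) (m!j), s)) GE) es"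

definition colchecks :: "sedge list \<Rightarrow> (nat \<times> int) list list \<Rightarrow> nat list \<Rightarrow> (int \<times> int \<times> int) list \<Rightarrow>
     sedge list \<Rightarrow> (nat \<times> int) list list \<Rightarrow> nat list \<Rightarrow> nat list list \<Rightarrow> bool" where
  "colchecks es ALc core OUTS GE GA GI maps = (
     (\<forall>v\<in>set [0..<length ALc]. \<forall>(w,s)\<in>set (ALc ! v). (v,w,s) \<in> set es \<or> (w,v,s) \<in> set es) \<and>
     kill2 ALc core (map (\<lambda>m. (m!0, m!1, m!2)) maps) OUTS Map.empty \<and>
     (\<forall>oc\<in>set OUTS. \<not> ext GA GI (oasg oc)) \<and>
     (\<forall>v\<in>set [0..<length GA]. \<forall>(w,s)\<in>set (GA ! v). (v,w,s) \<in> set GE \<or> (w,v,s) \<in> set GE) \<and>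
     (\<forall>m\<in>set maps. mapok es GE m))"

lemma colchecks_sound:
  assumes C: "colchecks es ALc core OUTS GE GA GI maps"
    and hr: "\<forall>v. h v \<in> {0,1,2,3}"
    and he: "\<And>a b s. (a,b,s) \<in> set es \<Longrightarrow> h a \<noteq> (s * h b) mod 4 \<and> h b \<noteq> (s * h a) mod 4"
  shows False
proof -
  have g: "goodh ALc h"
    unfolding goodh_def
  proof (intro conjI allI impI ballI)
    fix v show "h v \<in> {0,1,2,3}" using hr by auto
  next
    fix v x assume v: "v < length ALc" and x: "x \<in> set (ALc ! v)"
    obtain w s where x2: "x = (w,s)" by force
    have "(v,w,s) \<in> set es \<or> (w,v,s) \<in> set es"
      using C v x x2 unfolding colchecks_def by fastforce
    then show "case x of (w,s) \<Rightarrow> h v \<noteq> (s * h w) mod 4" using he x2 by auto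
  qed
  have "agrees Map.empty h" unfolding agrees_def by auto
  moreover have "kill2 ALc core (map (\<lambda>m. (m!0, m!1, m!2)) maps) OUTS Map.empty"
    using C unfolding colchecks_def by auto
  ultimately obtain m where m: "m \<in> set maps" and mo: "(h (m!0), h (m!1), h (m!2)) \<in> set OUTS"
    using kill2_sound[OF g] by fastforce
  define hl where "hl i = h (m ! i)" for i
  have mk: "set (map (\<lambda>(i,j,s). (min (m!i) (m!j), max (m!i) (m!j), s)) GE) \<subseteq> set es"
    using C m subchk_set unfolding colchecks_def mapok_def by blast
  have gE: "(m!i, m!j, s) \<in> set es \<or> (m!j, m!i, s) \<in> set es" if "(i,j,s) \<in> set GE" for i j s
  proof -
    have "(min (m!i) (m!j), max (m!i) (m!j), s) \<in> set es" using mk that by force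
    then show ?thesis by (cases "m!i \<le> m!j") (auto simp: min_def max_def)
  qed
  have gl: "goodh GA hl"
    unfolding goodh_def
  proof (intro conjI allI impI ballI)
    fix v show "hl v \<in> {0,1,2,3}" unfolding hl_def using hr by auto
  next
    fix v x assume v: "v < length GA" and x: "x \<in> set (GA ! v)"
    obtain w s where x2: "x = (w,s)" by force
    have "(v,w,s) \<in> set GE \<or> (w,v,s) \<in> set GE"
      using C v x x2 unfolding colchecks_def by fastforce
    then have "(m!v, m!w, s) \<in> set es \<or> (m!w, m!v, s) \<in> set es" using gE by blast
    then show "case x of (w,s) \<Rightarrow> hl v \<noteq> (s * hl w) mod 4" using he x2 unfolding hl_def by auto
  qed
  have ag: "agrees (oasg (h (m!0), h (m!1), h (m!2))) hl"
    unfolding agrees_def oasg_def hl_def by auto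
  have "ext GA GI (oasg (h (m!0), h (m!1), h (m!2)))" using ext_sound[OF gl ag] .
  moreover have "\<not> ext GA GI (oasg (h (m!0), h (m!1), h (m!2)))" using C mo unfolding colchecks_def by auto
  ultimately show False by blast
qed



definition icr :: "int \<times> int \<Rightarrow> int \<times> int \<Rightarrow> int \<times> int \<Rightarrow> int" where
  "icr P Q R = (fst Q - fst P) * (snd R - snd P) - (snd Q - snd P) * (fst R - fst P)"

definition cp :: "int \<times> int \<Rightarrow> complex" where
  "cp P = Complex (of_int (fst P)) (of_int (snd P))"

lemma cr_cp: "cr (cp P) (cp Q) (cp R) = of_int (icr P Q R)"
  unfolding cr_def cp_def icr_def by simp

lemma cp_inj: "cp P = cp Q \<Longrightarrow> P = Q"
  unfolding cp_def complex_eq_iff by (simp add: prod_eq_iff)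

lemma cr_swap: "cr b a c = - cr a b c"
  unfolding cr_def by (simp add: algebra_simps)

definition segok :: "(int \<times> int) \<times> (int \<times> int) \<Rightarrow> (int \<times> int) \<times> (int \<times> int) \<Rightarrow> bool" where
  "segok x y = (closed_segment (cp (fst x)) (cp (snd x)) \<inter> closed_segment (cp (fst y)) (cp (snd y))
      \<subseteq> {cp (fst x), cp (snd x)} \<inter> {cp (fst y), cp (snd y)})"

definition ptok :: "(int \<times> int) \<times> (int \<times> int) \<Rightarrow> int \<times> int \<Rightarrow> bool" where
  "ptok x R = (cp R \<in> closed_segment (cp (fst x)) (cp (snd x)) \<longrightarrow> R = fst x \<or> R = snd x)"

definition lsep :: "(int \<times> int) \<times> (int \<times> int) \<Rightarrow> (int \<times> int) \<times> (int \<times> int) \<Rightarrow> bool" where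
  "lsep x y = (case x of (P,Q) \<Rightarrow> case y of (R,T) \<Rightarrow>
     (if P = R then icr P Q T \<noteq> 0 else if P = T then icr P Q R \<noteq> 0
      else if Q = R then icr Q P T \<noteq> 0 else if Q = T then icr Q P R \<noteq> 0
      else (icr P Q R * icr P Q T > 0 \<or> icr R T P * icr R T Q > 0)))"

definition lpt :: "(int \<times> int) \<times> (int \<times> int) \<Rightarrow> int \<times> int \<Rightarrow> bool" where
  "lpt x R = (case x of (P,Q) \<Rightarrow> R = P \<or> R = Q \<or> icr P Q R \<noteq> 0)"

lemma lpt_sound: assumes "lpt x R" shows "ptok x R"
proof -
  obtain P Q where x: "x = (P,Q)" by (cases x) auto
  show ?thesis unfolding ptok_def x fst_conv snd_conv
  proof
    assume "cp R \<in> closed_segment (cp P) (cp Q)"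
    then have "cr (cp P) (cp Q) (cp R) = 0" by (rule cr_on_seg)
    then have "icr P Q R = 0" unfolding cr_cp by simp
    then show "R = P \<or> R = Q" using assms x unfolding lpt_def by auto
  qed
qed

lemma lsep_sound: assumes "lsep x y" shows "segok x y"
proof -
  obtain P Q R T where x: "x = (P,Q)" and y: "y = (R,T)" by (cases x, cases y) auto
  let ?P = "cp P" and ?Q = "cp Q" and ?R = "cp R" and ?T = "cp T"
  have cm: "\<And>a b. closed_segment a b = closed_segment b a" by (rule closed_segment_commute)
  show ?thesis
  proof (cases "P = R")
    case True
    then have "cr ?P ?Q ?T \<noteq> 0" using assms x y cr_cp unfolding lsep_def by simp
    then have "closed_segment ?P ?Q \<inter> closed_segment ?P ?T = {?P}" by (rule seg_share)
    then show ?thesis unfolding segok_def x y using True by auto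
  next
    case F1: False
    show ?thesis
    proof (cases "P = T")
      case True
      then have "cr ?P ?Q ?R \<noteq> 0" using assms x y cr_cp F1 unfolding lsep_def by simp
      then have "closed_segment ?P ?Q \<inter> closed_segment ?P ?R = {?P}" by (rule seg_share)
      then have "closed_segment ?P ?Q \<inter> closed_segment ?R ?P = {?P}" using cm[of ?R ?P] by (simp only:)
      then show ?thesis unfolding segok_def x y using True by auto
    next
      case F2: False
      show ?thesis
      proof (cases "Q = R")
        case True
        then have "cr ?Q ?P ?T \<noteq> 0" using assms x y cr_cp F1 F2 unfolding lsep_def by simp
        then have "closed_segment ?Q ?P \<inter> closed_segment ?Q ?T = {?Q}" by (rule seg_share)
        then have "closed_segment ?P ?Q \<inter> closed_segment ?Q ?T = {?Q}" using cm[of ?P ?Q] by (simp only:)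
        then show ?thesis unfolding segok_def x y using True by auto
      next
        case F3: False
        show ?thesis
        proof (cases "Q = T")
          case True
          then have "cr ?Q ?P ?R \<noteq> 0" using assms x y cr_cp F1 F2 F3 unfolding lsep_def by simp
          then have "closed_segment ?Q ?P \<inter> closed_segment ?Q ?R = {?Q}" by (rule seg_share)
          then have "closed_segment ?P ?Q \<inter> closed_segment ?R ?Q = {?Q}" using cm[of ?P ?Q] cm[of ?R ?Q] by (simp only:)
          then show ?thesis unfolding segok_def x y using True by auto
        next
          case F4: False
          have "icr P Q R * icr P Q T > 0 \<or> icr R T P * icr R T Q > 0"
            using assms x y F1 F2 F3 F4 unfolding lsep_def by simp
          then have "cr ?P ?Q ?R * cr ?P ?Q ?T > 0 \<or> cr ?R ?T ?P * cr ?R ?T ?Q > 0"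
            unfolding cr_cp by (auto simp flip: of_int_mult)
          then have "closed_segment ?P ?Q \<inter> closed_segment ?R ?T = {}"
            using seg_disj1 by blast
          then show ?thesis unfolding segok_def x y by auto
        qed
      qed
    qed
  qed
qed

lemma seg_neg: assumes "cr A B P < 0" "cr A B Q < 0" "z \<in> closed_segment P Q" shows "cr A B z < 0"
proof -
  from assms(3) obtain u where u: "0 \<le> u" "u \<le> 1" and z: "z = (1 - u) *\<^sub>R P + u *\<^sub>R Q"
    unfolding closed_segment_def by auto
  have "(1 - u) * cr A B P \<le> 0" using u assms by (simp add: mult_nonneg_nonpos)
  moreover have "u * cr A B Q \<le> 0" using u assms by (simp add: mult_nonneg_nonpos)
  moreover have "(1 - u) * cr A B P < 0 \<or> u * cr A B Q < 0"
    using u assms by (cases "u = 0") (auto simp: mult_pos_neg)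
  ultimately show ?thesis unfolding z cr_comb by linarith
qed

lemma seg_pos: assumes "cr A B P > 0" "cr A B Q > 0" "z \<in> closed_segment P Q" shows "cr A B z > 0"
proof -
  from assms(3) obtain u where u: "0 \<le> u" "u \<le> 1" and z: "z = (1 - u) *\<^sub>R P + u *\<^sub>R Q"
    unfolding closed_segment_def by auto
  have "(1 - u) * cr A B P \<ge> 0" using u assms by simp
  moreover have "u * cr A B Q \<ge> 0" using u assms by simp
  moreover have "(1 - u) * cr A B P > 0 \<or> u * cr A B Q > 0"
    using u assms by (cases "u = 0") auto
  ultimately show ?thesis unfolding z cr_comb by linarith
qed

fun chkpairs2 :: "((int \<times> int) \<times> (int \<times> int)) list \<Rightarrow> bool" where
  "chkpairs2 [] = True"
| "chkpairs2 (x # xs) = ((\<forall>y\<in>set xs. lsep x y) \<and> chkpairs2 xs)"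

lemma segok_sym: "segok x y \<Longrightarrow> segok y x"
  unfolding segok_def by blast

lemma chkpairs2_D: "chkpairs2 xs \<Longrightarrow> x \<in> set xs \<Longrightarrow> y \<in> set xs \<Longrightarrow> x \<noteq> y \<Longrightarrow> segok x y"
  by (induction xs) (auto intro: lsep_sound segok_sym)

datatype ctree = Leaf | Node "int \<times> int" "int \<times> int" ctree ctree

fun chkt :: "ctree \<Rightarrow> ((int \<times> int) \<times> (int \<times> int)) list \<Rightarrow> (int \<times> int) list \<Rightarrow> bool" where
  "chkt Leaf segs pts = (chkpairs2 segs \<and> (\<forall>x\<in>set segs. \<forall>R\<in>set pts. lpt x R))"
| "chkt (Node A B t1 t2) segs pts =
     (chkt t1 (filter (\<lambda>(P,Q). \<not> (icr A B P < 0 \<and> icr A B Q < 0)) segs) (filter (\<lambda>R. \<not> icr A B R < 0) pts) \<and>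
      chkt t2 (filter (\<lambda>(P,Q). \<not> (icr A B P > 0 \<and> icr A B Q > 0)) segs) (filter (\<lambda>R. \<not> icr A B R > 0) pts))"

lemma chkt_sound:
  "chkt t segs pts \<Longrightarrow> (\<forall>x\<in>set segs. \<forall>y\<in>set segs. x \<noteq> y \<longrightarrow> segok x y) \<and> (\<forall>x\<in>set segs. \<forall>R\<in>set pts. ptok x R)"
proof (induction t arbitrary: segs pts)
  case Leaf
  then have "chkpairs2 segs" "\<forall>x\<in>set segs. \<forall>R\<in>set pts. lpt x R" by auto
  then show ?case using chkpairs2_D lpt_sound by blast
next
  case (Node A B t1 t2)
  let ?neg = "\<lambda>x. icr A B (fst x) < 0 \<and> icr A B (snd x) < 0"
  let ?pos = "\<lambda>x. icr A B (fst x) > 0 \<and> icr A B (snd x) > 0"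
  let ?L = "filter (\<lambda>(P,Q). \<not> (icr A B P < 0 \<and> icr A B Q < 0)) segs"
  let ?Lp = "filter (\<lambda>R. \<not> icr A B R < 0) pts"
  let ?R = "filter (\<lambda>(P,Q). \<not> (icr A B P > 0 \<and> icr A B Q > 0)) segs"
  let ?Rp = "filter (\<lambda>R. \<not> icr A B R > 0) pts"
  have c1: "chkt t1 ?L ?Lp" and c2: "chkt t2 ?R ?Rp" using Node.prems by auto
  note H1 = Node.IH(1)[OF c1] and H2 = Node.IH(2)[OF c2]
  have mL: "x \<in> set ?L" if "x \<in> set segs" "\<not> ?neg x" for x
    using that by (auto simp: case_prod_beta)
  have mR: "x \<in> set ?R" if "x \<in> set segs" "\<not> ?pos x" for x
    using that by (auto simp: case_prod_beta)
  have I1: "\<And>x y. x \<in> set segs \<Longrightarrow> y \<in> set segs \<Longrightarrow> x \<noteq> y \<Longrightarrow> \<not> ?neg x \<Longrightarrow> \<not> ?neg y \<Longrightarrow> segok x y"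
    using H1 mL by blast
  have I2: "\<And>x y. x \<in> set segs \<Longrightarrow> y \<in> set segs \<Longrightarrow> x \<noteq> y \<Longrightarrow> \<not> ?pos x \<Longrightarrow> \<not> ?pos y \<Longrightarrow> segok x y"
    using H2 mR by blast
  have J1: "\<And>x R. x \<in> set segs \<Longrightarrow> R \<in> set pts \<Longrightarrow> \<not> ?neg x \<Longrightarrow> \<not> icr A B R < 0 \<Longrightarrow> ptok x R"
  proof -
    fix x R assume "x \<in> set segs" "R \<in> set pts" "\<not> ?neg x" "\<not> icr A B R < 0"
    then have "x \<in> set ?L" "R \<in> set ?Lp" using mL by auto
    then show "ptok x R" using H1 by blast
  qed
  have J2: "\<And>x R. x \<in> set segs \<Longrightarrow> R \<in> set pts \<Longrightarrow> \<not> ?pos x \<Longrightarrow> \<not> icr A B R > 0 \<Longrightarrow> ptok x R"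
  proof -
    fix x R assume "x \<in> set segs" "R \<in> set pts" "\<not> ?pos x" "\<not> icr A B R > 0"
    then have "x \<in> set ?R" "R \<in> set ?Rp" using mR by auto
    then show "ptok x R" using H2 by blast
  qed
  have disj: "segok x y" if "?neg x" "?pos y" for x y
  proof -
    have "closed_segment (cp (fst x)) (cp (snd x)) \<inter> closed_segment (cp (fst y)) (cp (snd y)) = {}"
    proof (rule ccontr)
      assume "closed_segment (cp (fst x)) (cp (snd x)) \<inter> closed_segment (cp (fst y)) (cp (snd y)) \<noteq> {}"
      then obtain z where z1: "z \<in> closed_segment (cp (fst x)) (cp (snd x))"
        and z2: "z \<in> closed_segment (cp (fst y)) (cp (snd y))" by blast
      have "cr (cp A) (cp B) z < 0"
        using seg_neg[of "cp A" "cp B" "cp (fst x)" "cp (snd x)" z] z1 that(1) by (simp add: cr_cp)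
      moreover have "cr (cp A) (cp B) z > 0"
        using seg_pos[of "cp A" "cp B" "cp (fst y)" "cp (snd y)" z] z2 that(2) by (simp add: cr_cp)
      ultimately show False by simp
    qed
    then show ?thesis unfolding segok_def by simp
  qed
  have pdisj1: "ptok x R" if "?neg x" "icr A B R > 0" for x R
  proof -
    have "cp R \<notin> closed_segment (cp (fst x)) (cp (snd x))"
    proof
      assume "cp R \<in> closed_segment (cp (fst x)) (cp (snd x))"
      then have "cr (cp A) (cp B) (cp R) < 0"
        using seg_neg[of "cp A" "cp B" "cp (fst x)" "cp (snd x)" "cp R"] that(1) by (simp add: cr_cp)
      then show False using that(2) by (simp add: cr_cp)
    qed
    then show ?thesis unfolding ptok_def by simp
  qed
  have pdisj2: "ptok x R" if "?pos x" "icr A B R < 0" for x R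
  proof -
    have "cp R \<notin> closed_segment (cp (fst x)) (cp (snd x))"
    proof
      assume "cp R \<in> closed_segment (cp (fst x)) (cp (snd x))"
      then have "cr (cp A) (cp B) (cp R) > 0"
        using seg_pos[of "cp A" "cp B" "cp (fst x)" "cp (snd x)" "cp R"] that(1) by (simp add: cr_cp)
      then show False using that(2) by (simp add: cr_cp)
    qed
    then show ?thesis unfolding ptok_def by simp
  qed
  show ?case
  proof (intro conjI ballI impI)
    fix x y assume xy: "x \<in> set segs" "y \<in> set segs" "x \<noteq> y"
    show "segok x y"
    proof (cases "?neg x \<or> ?neg y")
      case False then show ?thesis using I1 xy by blast
    next
      case True
      show ?thesis
      proof (cases "?pos x \<or> ?pos y")
        case False then show ?thesis using I2 xy by blast
      next
        case True2: True
        consider "?neg x" "?pos y" | "?neg y" "?pos x" | "?neg x" "?pos x" | "?neg y" "?pos y"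
          using True True2 by blast
        then show ?thesis
        proof cases
          case 1 then show ?thesis using disj by blast
        next
          case 2 then show ?thesis using disj segok_sym by blast
        next
          case 3 then show ?thesis by simp
        next
          case 4 then show ?thesis by simp
        qed
      qed
    qed
  next
    fix x R assume xR: "x \<in> set segs" "R \<in> set pts"
    show "ptok x R"
    proof (cases "?neg x \<or> icr A B R < 0")
      case False then show ?thesis using J1 xR by blast
    next
      case True
      show ?thesis
      proof (cases "?pos x \<or> icr A B R > 0")
        case False then show ?thesis using J2 xR by blast
      next
        case True2: True
        have "(?neg x \<and> icr A B R > 0) \<or> (?pos x \<and> icr A B R < 0)" using True True2 by linarith
        then show ?thesis using pdisj1 pdisj2 by blast
      qed
    qed
  qed
qed



definition EE :: "sedge list \<Rightarrow> nat set set" where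
  "EE es = (\<lambda>(a,b,s). {a,b}) ` set es"

definition sg :: "sedge list \<Rightarrow> nat set \<Rightarrow> int" where
  "sg es e = (if e \<in> (\<lambda>(a,b,s). {a,b}) ` {x\<in>set es. snd (snd x) = -1} then -1 else 1)"

definition allchk :: "nat \<Rightarrow> (int \<times> int) list \<Rightarrow> sedge list \<Rightarrow> ctree \<Rightarrow> (nat \<times> int) list list \<Rightarrow> nat list
    \<Rightarrow> (int \<times> int \<times> int) list \<Rightarrow> sedge list \<Rightarrow> (nat \<times> int) list list \<Rightarrow> nat list \<Rightarrow> nat list list \<Rightarrow> bool" where
  "allchk N cs es t ALc core OUTS GE GA GI maps = (length cs = N \<and> distinct cs \<and>
      distinct (map (\<lambda>(a,b,s). (a,b)) es) \<and> (\<forall>(a,b,s)\<in>set es. a < b \<and> b < N \<and> (s = 1 \<or> s = -1)) \<and>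
      chkt t (map (\<lambda>(a,b,s). (cs!a, cs!b)) es) cs \<and> colchecks es ALc core OUTS GE GA GI maps)"

lemma two_eq: "(a::nat) < b \<Longrightarrow> c < d \<Longrightarrow> {a,b} = {c,d} \<Longrightarrow> a = c \<and> b = d"
  by (metis doubleton_eq_iff less_asym)

context
  fixes N cs es t ALc core OUTS GE GA GI maps
  assumes A: "allchk N cs es t ALc core OUTS GE GA GI maps"
begin

lemma ed: "(a,b,s) \<in> set es \<Longrightarrow> a < b \<and> b < N \<and> (s = 1 \<or> s = -1)"
  using A unfolding allchk_def by fastforce

lemma sg_val: assumes x: "(a,b,s) \<in> set es" shows "sg es {a,b} = s"
proof -
  have inj: "inj_on (\<lambda>(a,b,s). (a,b)) (set es)" using A unfolding allchk_def by (simp add: distinct_map)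
  have ab: "a < b" "s = 1 \<or> s = -1" using ed[OF x] by auto
  show ?thesis
  proof (cases "s = -1")
    case True
    then show ?thesis unfolding sg_def using x by force
  next
    case False
    have "{a,b} \<notin> (\<lambda>(a,b,s). {a,b}) ` {x\<in>set es. snd (snd x) = -1}"
    proof
      assume "{a,b} \<in> (\<lambda>(a,b,s). {a,b}) ` {x\<in>set es. snd (snd x) = -1}"
      then obtain a' b' s' where y: "(a',b',s') \<in> set es" "s' = -1" "{a,b} = {a',b'}" by auto
      have "a' < b'" using ed[OF y(1)] by auto
      then have "a = a'" "b = b'" using two_eq[OF ab(1)] y(3) by auto
      then have "(a,b,s) = (a',b',s')" using inj x y(1) unfolding inj_on_def by fastforce
      then show False using y(2) False by simp
    qed
    then show ?thesis unfolding sg_def using ab False by auto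
  qed
qed

lemma colour_part: "\<not> (\<exists>f. Z4_colouring {..<N} (EE es) (sg es) f)"
proof
  assume "\<exists>f. Z4_colouring {..<N} (EE es) (sg es) f"
  then obtain f where f: "Z4_colouring {..<N} (EE es) (sg es) f" by blast
  define h where "h v = toi (f v)" for v
  have edge: "h a \<noteq> (s * h b) mod 4 \<and> h b \<noteq> (s * h a) mod 4" if x: "(a,b,s) \<in> set es" for a b s
  proof -
    have s: "s = 1 \<or> s = -1" using ed[OF x] by auto
    have e: "{a,b} \<in> EE es" unfolding EE_def using x by force
    have sv: "sg es {a,b} = s" using sg_val[OF x] .
    have fa: "\<forall>x y. {a,b} = {x,y} \<longrightarrow> f x \<noteq> of_int s * f y"
      using f e sv unfolding Z4_colouring_def by auto
    have "f a \<noteq> of_int s * f b" "f b \<noteq> of_int s * f a"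
      using fa[rule_format, of a b] fa[rule_format, of b a] by (auto simp: insert_commute)
    then show ?thesis unfolding h_def using toi_rel[OF s] by auto
  qed
  have hr: "\<forall>v. h v \<in> {0,1,2,3}" unfolding h_def using toi_range by auto
  have C: "colchecks es ALc core OUTS GE GA GI maps" using A unfolding allchk_def by auto
  show False using colchecks_sound[OF C hr edge] by blast
qed

lemma planar_part: "planar {..<N} (EE es)"
proof -
  let ?P = "\<lambda>v. cp (cs ! v)"
  have len: "length cs = N" and dist: "distinct cs" using A unfolding allchk_def by auto
  have CT: "chkt t (map (\<lambda>(a,b,s). (cs!a, cs!b)) es) cs" using A unfolding allchk_def by auto
  note S = chkt_sound[OF CT]
  have pinj: "a = b" if "a < N" "b < N" "?P a = ?P b" for a b
  proof -
    have "cs ! a = cs ! b" using that(3) cp_inj by blast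
    then show ?thesis using dist len that(1,2) nth_eq_iff_index_eq by metis
  qed
  have sx: "(cs!a, cs!b) \<in> set (map (\<lambda>(a,b,s). (cs!a, cs!b)) es)" if "(a,b,s) \<in> set es" for a b s
    using that by force
  have nov: "?P v \<notin> closed_segment (?P a) (?P b)" if x: "(a,b,s) \<in> set es" and v: "v < N" "v \<noteq> a" "v \<noteq> b" for a b s v
  proof -
    have ab: "a < N" "b < N" using ed[OF x] by auto
    have "cs ! v \<in> set cs" using v len by auto
    then have "ptok (cs!a, cs!b) (cs ! v)" using S sx[OF x] by blast
    moreover have "cs ! v \<noteq> cs ! a" "cs ! v \<noteq> cs ! b" using v ab dist len nth_eq_iff_index_eq by metis+
    ultimately show ?thesis unfolding ptok_def by auto
  qed
  define c where "c e = linepath (?P (Min e)) (?P (Max e))" for e :: "nat set"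
  have cab: "c {a,b} = linepath (?P a) (?P b)" if "a < b" for a b
    unfolding c_def using that by (simp add: min_def max_def)
  have sgraph: "simple_graph {..<N} (EE es)"
    unfolding simple_graph_def EE_def using ed by fastforce
  have emb1: "arc (c e) \<and> {pathstart (c e), pathfinish (c e)} = ?P ` e \<and>
              path_image (c e) \<inter> ?P ` {..<N} = ?P ` e" if e: "e \<in> EE es" for e
  proof -
    obtain a b s where x: "(a,b,s) \<in> set es" and ee: "e = {a,b}" using e unfolding EE_def by auto
    have ab: "a < b" "b < N" using ed[OF x] by auto
    have ne: "?P a \<noteq> ?P b"
    proof
      assume "?P a = ?P b"
      then have "a = b" using pinj[of a b] ab by simp
      then show False using ab by simp
    qed
    have "closed_segment (?P a) (?P b) \<inter> ?P ` {..<N} = ?P ` {a,b}"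
    proof
      show "closed_segment (?P a) (?P b) \<inter> ?P ` {..<N} \<subseteq> ?P ` {a,b}"
      proof
        fix z assume z: "z \<in> closed_segment (?P a) (?P b) \<inter> ?P ` {..<N}"
        then obtain v where v: "v < N" "z = ?P v" by auto
        have "v = a \<or> v = b"
        proof (rule ccontr)
          assume "\<not> (v = a \<or> v = b)"
          then have "?P v \<notin> closed_segment (?P a) (?P b)" using nov[OF x v(1)] by auto
          then show False using z v by auto
        qed
        then show "z \<in> ?P ` {a,b}" using v by auto
      qed
      show "?P ` {a,b} \<subseteq> closed_segment (?P a) (?P b) \<inter> ?P ` {..<N}" using ab by auto
    qed
    then show ?thesis using ee cab[OF ab(1)] ne by auto
  qed
  have emb2: "path_image (c e) \<inter> path_image (c e') \<subseteq> ?P ` (e \<inter> e')"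
    if e: "e \<in> EE es" and e': "e' \<in> EE es" and ne: "e \<noteq> e'" for e e'
  proof -
    obtain a b s where x: "(a,b,s) \<in> set es" and ee: "e = {a,b}" using e unfolding EE_def by auto
    obtain a' b' s' where y: "(a',b',s') \<in> set es" and ee': "e' = {a',b'}" using e' unfolding EE_def by auto
    have ab: "a < b" "b < N" using ed[OF x] by auto
    have ab': "a' < b'" "b' < N" using ed[OF y] by auto
    have pi: "path_image (c e) = closed_segment (?P a) (?P b)" "path_image (c e') = closed_segment (?P a') (?P b')"
      using cab ab ab' ee ee' by auto
    have "(a,b) \<noteq> (a',b')" using ne ee ee' by auto
    then have "(cs!a, cs!b) \<noteq> (cs!a', cs!b')"
      using dist len ab ab' nth_eq_iff_index_eq by (metis less_trans prod.inject)
    then have "segok (cs!a, cs!b) (cs!a', cs!b')" using S sx[OF x] sx[OF y] by blast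
    then have sub: "closed_segment (?P a) (?P b) \<inter> closed_segment (?P a') (?P b') \<subseteq> {?P a, ?P b} \<inter> {?P a', ?P b'}"
      unfolding segok_def by simp
    have "{?P a, ?P b} \<inter> {?P a', ?P b'} \<subseteq> ?P ` ({a,b} \<inter> {a',b'})"
    proof
      fix z assume z: "z \<in> {?P a, ?P b} \<inter> {?P a', ?P b'}"
      have "\<exists>u\<in>{a,b}. z = ?P u" using z by auto
      moreover have "\<exists>w\<in>{a',b'}. z = ?P w" using z by auto
      ultimately obtain u w where u: "u \<in> {a,b}" "w \<in> {a',b'}" "z = ?P u" "z = ?P w" by blast
      have "u < N" "w < N" using u ab ab' by auto
      then have "u = w" using pinj u by metis
      then show "z \<in> ?P ` ({a,b} \<inter> {a',b'})" using u by auto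
    qed
    then show ?thesis using sub pi ee ee' by auto
  qed
  have "planar_embedding {..<N} (EE es) ?P c"
    unfolding planar_embedding_def
  proof (intro conjI)
    show "inj_on ?P {..<N}" using pinj by (auto simp: inj_on_def)
    show "\<forall>e\<in>EE es. arc (c e) \<and> {pathstart (c e), pathfinish (c e)} = ?P ` e \<and>
              path_image (c e) \<inter> ?P ` {..<N} = ?P ` e" using emb1 by blast
    show "\<forall>e\<in>EE es. \<forall>e'\<in>EE es. e \<noteq> e' \<longrightarrow> path_image (c e) \<inter> path_image (c e') \<subseteq> ?P ` (e \<inter> e')"
      using emb2 by blast
  qed
  then show ?thesis unfolding planar_def using sgraph by blast
qed

lemma signature_part: "signature (EE es) (sg es)"
  unfolding signature_def sg_def by auto

lemma generic:
  "planar {..<N} (EE es) \<and> signature (EE es) (sg es) \<and>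
   \<not> (\<exists>f. Z4_colouring {..<N} (EE es) (sg es) f) \<and> \<not> signed_Z4_colourable {..<N} (EE es)"
  using planar_part signature_part colour_part
  unfolding signed_Z4_colourable_def by blast

end


section \<open>The concrete counterexample\<close>

definition gNN :: nat where "gNN = 48"
definition gCS :: "(int \<times> int) list" where "gCS = [(0,0), (2000,0), (1000,1800), (976,582), (992,194), (1302,902), (562,34), (956,14), (846,46), (1134,68), (698,24), (1128,30), (708,68), (1624,148), (1476,272), (1452,224), (1246,298), (1578,192), (1346,314), (1462,172), (790,400), (544,296), (680,312), (596,218), (700,366), (504,238), (808,342), (1682,508), (1508,862), (1530,764), (1362,1024), (1626,630), (1406,1016), (1576,640), (1050,1406), (1010,1196), (1062,1216), (1096,1008), (1032,1338), (1036,1068), (1102,1266), (366,452), (512,838), (534,690), (734,912), (410,590), (638,966), (522,528)]"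
definition gES :: "sedge list" where "gES = [(0,1,1), (0,2,1), (0,3,1), (1,2,1), (1,3,1), (2,3,1), (0,4,1), (1,4,1), (3,4,1), (1,5,1), (2,5,1), (3,5,1), (1,9,1), (4,9,1), (6,12,1), (0,6,1), (0,12,1), (8,12,1), (6,8,1), (4,12,1), (6,10,1), (0,10,1), (8,10,(-1)), (1,11,1), (9,11,1), (1,7,1), (7,11,1), (0,7,1), (9,12,(-1)), (8,9,(-1)), (7,10,1), (10,11,(-1)), (8,11,1), (3,16,1), (4,16,1), (13,19,1), (1,13,1), (1,19,1), (15,19,1), (13,15,1), (4,19,1), (13,17,1), (1,17,1), (15,17,(-1)), (3,18,1), (16,18,1), (3,14,1), (14,18,1), (1,14,1), (16,19,(-1)), (15,16,(-1)), (14,17,1), (17,18,(-1)), (15,18,1), (0,23,1), (4,23,1), (20,26,1), (3,20,1), (3,26,1), (22,26,1), (20,22,1), (4,26,1), (20,24,1), (3,24,1), (22,24,(-1)), (0,25,1), (23,25,1), (0,21,1), (21,25,1), (3,21,1), (23,26,(-1)), (22,23,(-1)), (21,24,1), (24,25,(-1)), (22,25,1), (2,30,1), (5,30,1), (27,33,1), (1,27,1), (1,33,1), (29,33,1), (27,29,1), (5,33,1), (27,31,1), (1,31,1), (29,31,(-1)), (2,32,1), (30,32,1), (2,28,1), (28,32,1), (1,28,1), (30,33,(-1)), (29,30,(-1)), (28,31,1), (31,32,(-1)), (29,32,1), (3,37,1), (5,37,1), (34,40,1), (2,34,1), (2,40,1), (36,40,1), (34,36,1), (5,40,1), (34,38,1),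 (2,38,1), (36,38,(-1)), (3,39,1), (37,39,1), (3,35,1), (35,39,1), (2,35,1), (37,40,(-1)), (36,37,(-1)), (35,38,1), (38,39,(-1)), (36,39,1), (2,44,1), (3,44,1), (41,47,1), (0,41,1), (0,47,1), (43,47,1), (41,43,1), (3,47,1), (41,45,1), (0,45,1), (43,45,(-1)), (2,46,1), (44,46,1), (2,42,1), (42,46,1), (0,42,1), (44,47,(-1)), (43,44,(-1)), (42,45,1), (45,46,(-1)), (43,46,1)]"
definition gTR :: ctree where "gTR = (Node (0,401) (1,401) (Node (977,0) (977,1) (Node (639,0) (639,1) (Node (0,591) (1,591) (Node (513,0) (513,1) Leaf (Node (0,691) (1,691) Leaf Leaf)) Leaf) (Node (0,583) (1,583) Leaf Leaf)) (Node (1303,0) (1303,1) (Node (0,903) (1,903) (Node (1037,0) (1037,1) Leaf (Node (0,1009) (1,1009) Leaf Leaf)) Leaf) (Node (0,765) (1,765) Leaf (Node (0,631) (1,631) Leaf Leaf)))) (Node (1135,0) (1135,1) (Node (0,69) (1,69) (Node (701,0) (701,1) (Node (545,0) (545,1) Leaf (Node (0,219) (1,219) Leaf Leaf)) (Node (0,195) (1,195) Leaf Leaf)) (Node (699,0) (699,1) Leaf (Node (957,0) (957,1) (Node (0,15) (1,15) Leaf Leaf) Leaf))) (Node (1463,0) (1463,1) (Node (0,173) (1,173) (Node (0,225) (1,225) Leaf Leaf) Leaf) Leaf)))"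
definition gALc :: "(nat \<times> int) list list" where "gALc = [[(1,1), (2,1), (3,1), (4,1)], [(0,1), (2,1), (3,1), (4,1), (5,1)], [(0,1), (1,1), (3,1), (5,1)], [(0,1), (1,1), (2,1), (4,1), (5,1)], [(0,1), (1,1), (3,1)], [(1,1), (2,1), (3,1)]]"
definition gCORE :: "nat list" where "gCORE = [0,1,2,3,4,5]"
definition gOUTS :: "(int \<times> int \<times> int) list" where "gOUTS = [(1,3,0),(3,1,0),(1,3,2),(3,1,2)]"
definition gGE :: "sedge list" where "gGE = [(1,6,1), (2,6,1), (3,9,1), (0,3,1), (0,9,1), (5,9,1), (3,5,1), (2,9,1), (3,7,1), (0,7,1), (5,7,(-1)), (1,8,1), (6,8,1), (1,4,1), (4,8,1), (0,4,1), (6,9,(-1)), (5,6,(-1)), (4,7,1), (7,8,(-1)), (5,8,1)]"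
definition gGA :: "(nat \<times> int) list list" where "gGA = [[(3,1), (9,1), (7,1), (4,1)], [(6,1), (8,1), (4,1)], [(6,1), (9,1)], [(9,1), (0,1), (5,1), (7,1)], [(1,1), (8,1), (0,1), (7,1)], [(9,1), (3,1), (7,(-1)), (6,(-1)), (8,1)], [(1,1), (2,1), (8,1), (9,(-1)), (5,(-1))], [(3,1), (0,1), (5,(-1)), (4,1), (8,(-1))], [(1,1), (6,1), (4,1), (7,(-1)), (5,1)], [(3,1), (0,1), (5,1), (2,1), (6,(-1))]]"
definition gGI :: "nat list" where "gGI = [4, 6, 8, 7, 5, 9, 3]"
definition gMAPS :: "nat list list" where "gMAPS = [[0, 1, 4, 6, 7, 8, 9, 10, 11, 12], [1, 3, 4, 13, 14, 15, 16, 17, 18, 19], [3, 0, 4, 20, 21, 22, 23, 24, 25, 26], [1, 2, 5, 27, 28, 29, 30, 31, 32, 33], [2, 3, 5, 34, 35, 36, 37, 38, 39, 40], [0, 2, 3, 41, 42, 43, 44, 45, 46, 47]]"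

theorem mainTheorem14:
  shows "\<exists>(V :: nat set) E \<sigma>. planar V E \<and> signature E \<sigma> \<and>
           \<not> (\<exists>f. Z4_colouring V E \<sigma> f) \<and> \<not> signed_Z4_colourable V E"
proof -
  have A: "allchk gNN gCS gES gTR gALc gCORE gOUTS gGE gGA gGI gMAPS" by code_simp
  show ?thesis using generic[OF A] by blast
qed

end
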